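(* Let $(C,S)$ be a right-angled Coxeter system, $D>0$, and $\alpha,\beta\in C$ such that $\gamma=\alpha^{-1}\beta$ is nontrivial and has $D$-bounded product projections. Then there is a minimal wall $W$ in $\mathbf{W}(\alpha,\beta)$ such that $W\cap W'\ne\emptyset$ for at most $(2D+1)\cdot4^D$ walls $W'\in\mathbf{W}(\alpha,\beta)$.
   Context: Walls: for a reflection $r$ of $C$ (conjugate of a generator), the set of edges $\{g,gs\}$ of $\mathrm{Cay}(C,S)$ with $gsg^{-1}=r$ (hyperplanes of the Davis complex); two walls intersect if the hyperplanes intersect. $\mathbf{W}(\alpha,\beta)$ is the set of walls separating $\alpha$ from $\beta$ (every edge path from $\alpha$ to $\beta$ uses an edge of the wall), partially ordered by $W<W'$ iff $W$ separates $\alpha$ from $W'$; $\mathbf{W}(\gamma)=\mathbf{W}(\mathrm{id},\gamma)$. $\gamma$ has $D$-bounded product projections if every pair of disjoint subsets $A,B\subset\mathbf{W}(\gamma)$ with every element of $A$ incomparable to every element of $B$ satisfies $\min(|A|,|B|)\le D$. *)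

theory Defs
  imports Complex_Main
begin

text \<open>Group elements are equivalence classes of words over S
  modulo the relations s s = 1 and s t = t s for E s t.\<close>

inductive rac_step :: "'a set \<Rightarrow> ('a \<Rightarrow> 'a \<Rightarrow> bool) \<Rightarrow> 'a list \<Rightarrow> 'a list \<Rightarrow> bool"
  for S E where
  del: "s \<in> S \<Longrightarrow> rac_step S E (u @ [s, s] @ v) (u @ v)"
| swap: "s \<in> S \<Longrightarrow> t \<in> S \<Longrightarrow> E s t \<Longrightarrow> rac_step S E (u @ [s, t] @ v) (u @ [t, s] @ v)"

definition rac_eq :: "'a set \<Rightarrow> ('a \<Rightarrow> 'a \<Rightarrow> bool) \<Rightarrow> 'a list \<Rightarrow> 'a list \<Rightarrow> bool" where
  "rac_eq S E = (symclp (rac_step S E))\<^sup>*\<^sup>*"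

definition elt :: "'a set \<Rightarrow> ('a \<Rightarrow> 'a \<Rightarrow> bool) \<Rightarrow> 'a list \<Rightarrow> 'a list set" where
  "elt S E w = {v. rac_eq S E w v}"

definition RAC :: "'a set \<Rightarrow> ('a \<Rightarrow> 'a \<Rightarrow> bool) \<Rightarrow> 'a list set set" where
  "RAC S E = {elt S E w | w. set w \<subseteq> S}"

definition right_angled_coxeter :: "'a set \<Rightarrow> ('a \<Rightarrow> 'a \<Rightarrow> bool) \<Rightarrow> bool" where
  "right_angled_coxeter S E \<longleftrightarrow>
     (\<forall>s\<in>S. \<forall>t\<in>S. E s t \<longleftrightarrow> E t s) \<and> (\<forall>s\<in>S. \<not> E s s)"

definition cay_adj :: "'a set \<Rightarrow> ('a \<Rightarrow> 'a \<Rightarrow> bool) \<Rightarrow> 'a list set \<Rightarrow> 'a list set \<Rightarrow> bool" where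
  "cay_adj S E g h \<longleftrightarrow>
     (\<exists>w s. set w \<subseteq> S \<and> s \<in> S \<and> g = elt S E w \<and> h = elt S E (w @ [s]))"

definition cay_path :: "'a set \<Rightarrow> ('a \<Rightarrow> 'a \<Rightarrow> bool) \<Rightarrow> 'a list set list \<Rightarrow> 'a list set \<Rightarrow> 'a list set \<Rightarrow> bool" where
  "cay_path S E p x y \<longleftrightarrow> p \<noteq> [] \<and> hd p = x \<and> last p = y \<and>
     (\<forall>i < length p - 1. cay_adj S E (p ! i) (p ! Suc i))"

definition path_edges :: "'b list \<Rightarrow> 'b set set" where
  "path_edges p = {{p ! i, p ! Suc i} | i. i < length p - 1}"

text \<open>Reflections: conjugates g s g^{-1} of generators (the inverse of a word is its reverse).\<close>
definition reflection :: "'a set \<Rightarrow> ('a \<Rightarrow> 'a \<Rightarrow> bool) \<Rightarrow> 'a list set \<Rightarrow> bool" where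
  "reflection S E r \<longleftrightarrow> (\<exists>w s. set w \<subseteq> S \<and> s \<in> S \<and> r = elt S E (w @ [s] @ rev w))"

definition wall :: "'a set \<Rightarrow> ('a \<Rightarrow> 'a \<Rightarrow> bool) \<Rightarrow> 'a list set \<Rightarrow> 'a list set set set" where
  "wall S E r = {{elt S E w, elt S E (w @ [s])} | w s.
      set w \<subseteq> S \<and> s \<in> S \<and> elt S E (w @ [s] @ rev w) = r}"

definition walls :: "'a set \<Rightarrow> ('a \<Rightarrow> 'a \<Rightarrow> bool) \<Rightarrow> 'a list set set set set" where
  "walls S E = {wall S E r | r. reflection S E r}"

definition separates :: "'a set \<Rightarrow> ('a \<Rightarrow> 'a \<Rightarrow> bool) \<Rightarrow> 'a list set set set \<Rightarrow> 'a list set \<Rightarrow> 'a list set \<Rightarrow> bool" where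
  "separates S E W x y \<longleftrightarrow> (\<forall>p. cay_path S E p x y \<longrightarrow> (\<exists>e \<in> path_edges p. e \<in> W))"

definition Wsep :: "'a set \<Rightarrow> ('a \<Rightarrow> 'a \<Rightarrow> bool) \<Rightarrow> 'a list set \<Rightarrow> 'a list set \<Rightarrow> 'a list set set set set" where
  "Wsep S E x y = {W \<in> walls S E. separates S E W x y}"

definition wall_less :: "'a set \<Rightarrow> ('a \<Rightarrow> 'a \<Rightarrow> bool) \<Rightarrow> 'a list set \<Rightarrow> 'a list set set set \<Rightarrow> 'a list set set set \<Rightarrow> bool" where
  "wall_less S E x W W' \<longleftrightarrow> W \<noteq> W' \<and> (\<forall>e \<in> W'. \<forall>v \<in> e. separates S E W x v)"

definition incomparable :: "'a set \<Rightarrow> ('a \<Rightarrow> 'a \<Rightarrow> bool) \<Rightarrow> 'a list set \<Rightarrow> 'a list set set set \<Rightarrow> 'a list set set set \<Rightarrow> bool" where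
  "incomparable S E x W W' \<longleftrightarrow> \<not> wall_less S E x W W' \<and> \<not> wall_less S E x W' W"

text \<open>D-bounded product projections for gamma, with W(gamma) = W(id, gamma).\<close>
definition bounded_product_projections ::
  "'a set \<Rightarrow> ('a \<Rightarrow> 'a \<Rightarrow> bool) \<Rightarrow> real \<Rightarrow> 'a list set \<Rightarrow> bool" where
  "bounded_product_projections S E D \<gamma> \<longleftrightarrow>
     (\<forall>A B. A \<subseteq> Wsep S E (elt S E []) \<gamma> \<and> B \<subseteq> Wsep S E (elt S E []) \<gamma> \<and> A \<inter> B = {} \<and>
        (\<forall>a\<in>A. \<forall>b\<in>B. incomparable S E (elt S E []) a b) \<longrightarrow>
        real (min (card A) (card B)) \<le> D)"

text \<open>Hyperplanes of walls intersect: equal, or the walls cross (all four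
  quadrants of the two pairs of complementary halfspaces are nonempty).\<close>
definition walls_cross :: "'a set \<Rightarrow> ('a \<Rightarrow> 'a \<Rightarrow> bool) \<Rightarrow> 'a list set set set \<Rightarrow> 'a list set set set \<Rightarrow> bool" where
  "walls_cross S E W W' \<longleftrightarrow>
     (\<exists>x00 x01 x10 x11. x00 \<in> RAC S E \<and> x01 \<in> RAC S E \<and> x10 \<in> RAC S E \<and> x11 \<in> RAC S E \<and>
        \<not> separates S E W x00 x01 \<and> \<not> separates S E W x10 x11 \<and>
        separates S E W x00 x10 \<and> separates S E W x01 x11 \<and>
        \<not> separates S E W' x00 x10 \<and> \<not> separates S E W' x01 x11 \<and>
        separates S E W' x00 x01 \<and> separates S E W' x10 x11)"

definition walls_intersect :: "'a set \<Rightarrow> ('a \<Rightarrow> 'a \<Rightarrow> bool) \<Rightarrow> 'a list set set set \<Rightarrow> 'a list set set set \<Rightarrow> bool" where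
  "walls_intersect S E W W' \<longleftrightarrow> W = W' \<or> walls_cross S E W W'"

end

theory Submission
  imports Defs
begin


locale rc =
  fixes S :: "'a set" and E :: "'a \<Rightarrow> 'a \<Rightarrow> bool"
begin

abbreviation eqv (infix "\<sim>" 50) where "u \<sim> v \<equiv> rac_eq S E u v"
abbreviation cls where "cls w \<equiv> elt S E w"

lemma step_ctx: "rac_step S E u v \<Longrightarrow> rac_step S E (x @ u @ y) (x @ v @ y)"
proof (induction rule: rac_step.induct)
  case (del s u v)
  then show ?case using rac_step.del[where s=s and u="x@u" and v="v@y" and S=S and E=E] by simp
next
  case (swap s t u v)
  then show ?case using rac_step.swap[where s=s and t=t and u="x@u" and v="v@y" and S=S and E=E] by simp
qed

lemma eqv_refl[simp]: "u \<sim> u" by (simp add: rac_eq_def)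

lemma eqv_sym: "u \<sim> v \<Longrightarrow> v \<sim> u"
  unfolding rac_eq_def
  by (metis rtranclp_symclp_sym)

lemma eqv_trans: "u \<sim> v \<Longrightarrow> v \<sim> w \<Longrightarrow> u \<sim> w"
  unfolding rac_eq_def by simp

lemma eqv_ctx: "u \<sim> v \<Longrightarrow> (x @ u @ y) \<sim> (x @ v @ y)"
  unfolding rac_eq_def
proof (induction rule: rtranclp_induct)
  case base then show ?case by simp
next
  case (step v w)
  then have "symclp (rac_step S E) (x @ v @ y) (x @ w @ y)"
    by (auto simp: symclp_def intro: step_ctx)
  then show ?case using step by simp
qed

lemma eqv_app: "u \<sim> u' \<Longrightarrow> v \<sim> v' \<Longrightarrow> (u @ v) \<sim> (u' @ v')"
  using eqv_ctx[of u u' "[]" v] eqv_ctx[of v v' u' "[]"] eqv_trans by auto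

lemma step_rev: "rac_step S E u v \<Longrightarrow> symclp (rac_step S E) (rev u) (rev v)"
proof (induction rule: rac_step.induct)
  case (del s u v)
  then show ?case using rac_step.del[where s=s and u="rev v" and v="rev u" and S=S and E=E] by (simp add: symclp_def)
next
  case (swap s t u v)
  then have "rac_step S E (rev v @ [s, t] @ rev u) (rev v @ [t, s] @ rev u)"
    using rac_step.swap[where s=s and t=t and u="rev v" and v="rev u" and S=S and E=E] by simp
  then show ?case by (simp add: symclp_def)
qed

lemma eqv_rev: "u \<sim> v \<Longrightarrow> rev u \<sim> rev v"
  unfolding rac_eq_def
proof (induction rule: rtranclp_induct)
  case base then show ?case by simp
next
  case (step v w)
  then have "symclp (rac_step S E) (rev v) (rev w)"
    by (auto simp: symclp_def dest: step_rev)
  then show ?case using step by (meson rtranclp.rtrancl_into_rtrancl)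
qed

lemma eqv_ss: "s \<in> S \<Longrightarrow> (x @ [s, s] @ y) \<sim> (x @ y)"
  unfolding rac_eq_def using rac_step.del[where s=s and u=x and v=y and S=S and E=E]
  by (meson r_into_rtranclp symclp_def)

lemma eqv_inv: "set w \<subseteq> S \<Longrightarrow> (w @ rev w) \<sim> []"
proof (induction w rule: rev_induct)
  case Nil then show ?case by simp
next
  case (snoc x xs)
  then have "(xs @ [x] @ [x] @ rev xs) \<sim> (xs @ rev xs)"
    using eqv_ss[of x xs "rev xs"] by simp
  then show ?case using snoc eqv_trans by auto
qed

lemma eqv_inv2: "set w \<subseteq> S \<Longrightarrow> (rev w @ w) \<sim> []"
  using eqv_inv[of "rev w"] by simp

lemma cls_eq: "cls u = cls v \<longleftrightarrow> u \<sim> v"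
proof
  assume "cls u = cls v"
  moreover have "v \<in> cls v" by (simp add: elt_def)
  ultimately have "v \<in> cls u" by simp
  then show "u \<sim> v" by (simp add: elt_def)
next
  assume "u \<sim> v"
  then show "cls u = cls v" unfolding elt_def
    using eqv_sym eqv_trans by blast
qed

lemma cls_app: "cls u = cls u' \<Longrightarrow> cls v = cls v' \<Longrightarrow> cls (u @ v) = cls (u' @ v')"
  using eqv_app cls_eq by blast

lemma cls_app1: "cls u = cls u' \<Longrightarrow> cls (u @ v) = cls (u' @ v)"
  using cls_app by blast

lemma cls_app2: "cls v = cls v' \<Longrightarrow> cls (u @ v) = cls (u @ v')"
  using cls_app by blast

lemma cls_rev: "cls u = cls v \<Longrightarrow> cls (rev u) = cls (rev v)"
  using eqv_rev cls_eq by blast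

lemma cls_inv: "set w \<subseteq> S \<Longrightarrow> cls (w @ rev w @ v) = cls v"
  using eqv_app[OF eqv_inv[of w], of v v] cls_eq by simp

lemma cls_inv2: "set w \<subseteq> S \<Longrightarrow> cls (rev w @ w @ v) = cls v"
  using cls_inv[of "rev w" v] by simp

lemma cls_ss: "s \<in> S \<Longrightarrow> cls (x @ [s, s] @ y) = cls (x @ y)"
  using eqv_ss cls_eq by blast

end


context rc begin

definition refl_of :: "'a list \<Rightarrow> 'a \<Rightarrow> 'a list set" where
  "refl_of p x = cls (p @ [x] @ rev p)"

fun rl :: "'a list \<Rightarrow> 'a list \<Rightarrow> 'a list set list" where
  "rl p [] = []"
| "rl p (x # xs) = refl_of p x # rl (p @ [x]) xs"

lemma rl_app: "rl p (u @ v) = rl p u @ rl (p @ u) v"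
  by (induction u arbitrary: p) auto

lemma refl_of_cong: "cls p = cls p' \<Longrightarrow> refl_of p x = refl_of p' x"
proof -
  assume h: "cls p = cls p'"
  have 1: "cls (p @ ([x] @ rev p)) = cls (p' @ ([x] @ rev p))" by (rule cls_app1[OF h])
  have 2: "cls ((p' @ [x]) @ rev p) = cls ((p' @ [x]) @ rev p')" by (rule cls_app2[OF cls_rev[OF h]])
  show ?thesis unfolding refl_of_def using 1 2 by (metis append_assoc)
qed

lemma rl_cong: "cls p = cls p' \<Longrightarrow> rl p v = rl p' v"
proof (induction v arbitrary: p p')
  case Nil then show ?case by simp
next
  case (Cons x v)
  have h: "cls (p @ [x]) = cls (p' @ [x])" by (rule cls_app1[OF Cons.prems])
  show ?case using refl_of_cong[OF Cons.prems] Cons.IH[OF h] by simp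
qed

lemma length_rl[simp]: "length (rl p v) = length v"
  by (induction v arbitrary: p) auto

lemma nth_rl: "i < length v \<Longrightarrow> rl p v ! i = refl_of (p @ take i v) (v ! i)"
proof (induction v arbitrary: p i)
  case Nil then show ?case by simp
next
  case (Cons x v)
  then show ?case by (cases i) auto
qed

definition cnt :: "'a list set \<Rightarrow> 'a list set list \<Rightarrow> nat" where
  "cnt r xs = length (filter (\<lambda>g. g = r) xs)"

lemma cnt_app[simp]: "cnt r (xs @ ys) = cnt r xs + cnt r ys"
  by (simp add: cnt_def)

lemma cnt_Cons[simp]: "cnt r (x # ys) = (if x = r then Suc (cnt r ys) else cnt r ys)"
  by (simp add: cnt_def)

lemma cnt_Nil[simp]: "cnt r [] = 0"
  by (simp add: cnt_def)

definition par :: "'a list set \<Rightarrow> 'a list \<Rightarrow> bool" where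
  "par r w = odd (cnt r (rl [] w))"

lemma par_app: "par r (p @ c) = (par r p \<noteq> odd (cnt r (rl p c)))"
  unfolding par_def by (simp add: rl_app)

lemma step_cls: "rac_step S E u v \<Longrightarrow> cls u = cls v"
  unfolding cls_eq rac_eq_def by (meson r_into_rtranclp symclp_def)

lemma par_step: "rac_step S E u v \<Longrightarrow> par r u = par r v"
proof (induction rule: rac_step.induct)
  case (del s u v)
  have a: "refl_of (u @ [s]) s = refl_of u s"
    unfolding refl_of_def using cls_ss[OF del, of u "[s] @ rev u"] by simp
  have b: "rl (u @ [s, s]) v = rl u v"
    by (rule rl_cong) (use cls_ss[OF del, of u "[]"] in simp)
  have "rl [] (u @ [s, s] @ v) = rl [] u @ [refl_of u s, refl_of u s] @ rl u v"
    using a b by (simp add: rl_app)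
  moreover have "rl [] (u @ v) = rl [] u @ rl u v" by (simp add: rl_app)
  ultimately show ?case unfolding par_def by simp
next
  case (swap s t u v)
  have st: "rac_step S E (x @ [s, t] @ y) (x @ [t, s] @ y)" for x y
    using rac_step.swap[where s=s and t=t and u=x and v=y and S=S and E=E] swap by simp
  have a: "refl_of (u @ [s]) t = refl_of u t"
  proof -
    have "cls (u @ [s, t] @ ([s] @ rev u)) = cls (u @ [t, s] @ ([s] @ rev u))"
      by (rule step_cls[OF st])
    also have "\<dots> = cls ((u @ [t]) @ [s, s] @ rev u)" by simp
    also have "\<dots> = cls (u @ [t] @ rev u)" using cls_ss[OF swap(1), of "u @ [t]" "rev u"] by simp
    finally show ?thesis unfolding refl_of_def by simp
  qed
  have b: "refl_of (u @ [t]) s = refl_of u s"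
  proof -
    have "cls (u @ [s, t] @ ([t] @ rev u)) = cls (u @ [t, s] @ ([t] @ rev u))"
      by (rule step_cls[OF st])
    also have "cls (u @ [s, t] @ ([t] @ rev u)) = cls ((u @ [s]) @ [t, t] @ rev u)" by simp
    also have "\<dots> = cls (u @ [s] @ rev u)" using cls_ss[OF swap(2), of "u @ [s]" "rev u"] by simp
    finally show ?thesis unfolding refl_of_def by simp
  qed
  have c: "rl (u @ [s, t]) v = rl (u @ [t, s]) v"
    by (rule rl_cong) (use step_cls[OF st[of u "[]"]] in simp)
  have "rl [] (u @ [s, t] @ v) = rl [] u @ [refl_of u s, refl_of u t] @ rl (u @ [s, t]) v"
    using a by (simp add: rl_app)
  moreover have "rl [] (u @ [t, s] @ v) = rl [] u @ [refl_of u t, refl_of u s] @ rl (u @ [t, s]) v"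
    using b by (simp add: rl_app)
  ultimately show ?case unfolding par_def using c by simp
qed

lemma par_eqv: "u \<sim> v \<Longrightarrow> par r u = par r v"
  unfolding rac_eq_def
proof (induction rule: rtranclp_induct)
  case base then show ?case by simp
next
  case (step v w)
  then show ?case using par_step by (auto simp: symclp_def)
qed

definition sig :: "'a list set \<Rightarrow> 'a list set \<Rightarrow> bool" where
  "sig r g = (\<exists>w. g = cls w \<and> par r w)"

lemma sig_cls: "sig r (cls w) = par r w"
proof
  assume "sig r (cls w)"
  then obtain w' where "cls w = cls w'" "par r w'" unfolding sig_def by blast
  then show "par r w" using par_eqv cls_eq by blast
next
  assume "par r w" then show "sig r (cls w)" unfolding sig_def by blast
qed

end


context rc begin

definition path_of :: "'a list \<Rightarrow> 'a list \<Rightarrow> 'a list set list" where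
  "path_of a c = map (\<lambda>i. cls (a @ take i c)) [0..<Suc (length c)]"

lemma length_path_of[simp]: "length (path_of a c) = Suc (length c)"
  by (simp add: path_of_def)

lemma nth_path_of: "i \<le> length c \<Longrightarrow> path_of a c ! i = cls (a @ take i c)"
  unfolding path_of_def by (subst nth_map) (simp_all del: upt_Suc)

lemma path_of_ne[simp]: "path_of a c \<noteq> []"
  using length_path_of[of a c] by (metis Zero_not_Suc list.size(3))

lemma take_Suc_nth: "i < length c \<Longrightarrow> take (Suc i) c = take i c @ [c ! i]"
  by (simp add: take_Suc_conv_app_nth)

lemma path_of_path:
  assumes "set a \<subseteq> S" "set c \<subseteq> S"
  shows "cay_path S E (path_of a c) (cls a) (cls (a @ c))"
proof -
  have "cay_adj S E (path_of a c ! i) (path_of a c ! Suc i)" if "i < length c" for i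
  proof -
    have "set (a @ take i c) \<subseteq> S" using assms set_take_subset[of i c] by auto
    moreover have "c ! i \<in> S" using assms that by (meson nth_mem subsetD)
    ultimately show ?thesis unfolding cay_adj_def using that
      by (auto simp: nth_path_of take_Suc_nth intro!: exI[of _ "a @ take i c"] exI[of _ "c ! i"])
  qed
  moreover have "hd (path_of a c) = cls a"
    using nth_path_of[of 0 c a] hd_conv_nth[OF path_of_ne] by simp
  moreover have "last (path_of a c) = cls (a @ c)"
    using nth_path_of[of "length c" c a] by (simp add: last_conv_nth)
  ultimately show ?thesis unfolding cay_path_def by (auto simp: path_of_def)
qed

lemma path_edges_path_of:
  "path_edges (path_of a c) = {{cls (a @ take i c), cls (a @ take i c @ [c ! i])} | i. i < length c}"
proof -
  have "path_of a c ! i = cls (a @ take i c) \<and> path_of a c ! Suc i = cls (a @ take i c @ [c ! i])"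
    if "i < length c" for i
    using that by (simp add: nth_path_of take_Suc_nth)
  then show ?thesis unfolding path_edges_def by fastforce
qed

lemma path_word:
  assumes "cay_path S E p (cls a) y"
  shows "\<exists>c. set c \<subseteq> S \<and> p = path_of a c \<and> y = cls (a @ c)"
proof -
  define n where "n = length p - 1"
  have ne: "p \<noteq> []" and hd: "hd p = cls a" and lst: "last p = y"
    and adj: "\<And>i. i < n \<Longrightarrow> cay_adj S E (p ! i) (p ! Suc i)"
    using assms unfolding cay_path_def n_def by auto
  have "\<forall>i. \<exists>ws. i < n \<longrightarrow> set (fst ws) \<subseteq> S \<and> snd ws \<in> S \<and> p ! i = cls (fst ws) \<and> p ! Suc i = cls (fst ws @ [snd ws])"
    using adj unfolding cay_adj_def by fastforce
  then obtain f where f: "\<And>i. i < n \<Longrightarrow> set (fst (f i)) \<subseteq> S \<and> snd (f i) \<in> S \<and> p ! i = cls (fst (f i)) \<and> p ! Suc i = cls (fst (f i) @ [snd (f i)])"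
    by metis
  define c where "c = map (\<lambda>i. snd (f i)) [0..<n]"
  have lc: "length c = n" by (simp add: c_def)
  have sc: "set c \<subseteq> S" using f by (auto simp: c_def)
  have pi: "p ! i = cls (a @ take i c)" if "i \<le> n" for i
    using that
  proof (induction i)
    case 0 then show ?case using hd ne by (simp add: hd_conv_nth)
  next
    case (Suc i)
    then have i: "i < n" by simp
    have "p ! Suc i = cls (fst (f i) @ [snd (f i)])" using f[OF i] by blast
    also have "\<dots> = cls ((a @ take i c) @ [snd (f i)])"
      using f[OF i] Suc by (intro cls_app1) simp
    also have "\<dots> = cls (a @ take (Suc i) c)"
      using i lc by (simp add: take_Suc_nth c_def)
    finally show ?case .
  qed
  have lp: "length p = Suc n" using ne n_def by simp
  have "p = path_of a c"
    by (rule nth_equalityI) (use lp lc pi in \<open>auto simp: nth_path_of\<close>)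
  moreover have "y = cls (a @ c)"
    using lst pi[of n] lp lc ne by (simp add: last_conv_nth)
  ultimately show ?thesis using sc by blast
qed

lemma wall_edge:
  assumes "set w \<subseteq> S" "s \<in> S"
  shows "{cls w, cls (w @ [s])} \<in> wall S E r \<longleftrightarrow> refl_of w s = r"
proof
  assume "refl_of w s = r"
  then show "{cls w, cls (w @ [s])} \<in> wall S E r"
    unfolding wall_def refl_of_def using assms by blast
next
  assume "{cls w, cls (w @ [s])} \<in> wall S E r"
  then obtain w' s' where w': "set w' \<subseteq> S" "s' \<in> S" "refl_of w' s' = r"
    and eq: "{cls w, cls (w @ [s])} = {cls w', cls (w' @ [s'])}"
    unfolding wall_def refl_of_def by blast
  from eq consider "cls w = cls w'" "cls (w @ [s]) = cls (w' @ [s'])"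
    | "cls w = cls (w' @ [s'])" "cls (w @ [s]) = cls w'"
    by (auto simp: doubleton_eq_iff)
  then show "refl_of w s = r"
  proof cases
    case 1
    have "refl_of w s = cls ((w @ [s]) @ rev w)" by (simp add: refl_of_def)
    also have "\<dots> = cls ((w' @ [s']) @ rev w)" by (rule cls_app1[OF 1(2)])
    also have "\<dots> = cls ((w' @ [s']) @ rev w')" by (rule cls_app2[OF cls_rev[OF 1(1)]])
    finally show ?thesis using w' by (simp add: refl_of_def)
  next
    case 2
    have "refl_of w s = cls ((w @ [s]) @ rev w)" by (simp add: refl_of_def)
    also have "\<dots> = cls (w' @ rev w)" by (rule cls_app1[OF 2(2)])
    also have "\<dots> = cls (w' @ rev (w' @ [s']))" by (rule cls_app2[OF cls_rev[OF 2(1)]])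
    finally show ?thesis using w' by (simp add: refl_of_def)
  qed
qed

lemma wallE:
  assumes "e \<in> wall S E r"
  obtains w s where "set w \<subseteq> S" "s \<in> S" "e = {cls w, cls (w @ [s])}" "refl_of w s = r"
  using assms unfolding wall_def refl_of_def by blast

lemma RACE:
  assumes "g \<in> RAC S E"
  obtains w where "set w \<subseteq> S" "g = cls w"
  using assms unfolding RAC_def by blast

lemma RACI: "set w \<subseteq> S \<Longrightarrow> cls w \<in> RAC S E"
  unfolding RAC_def by blast

lemma wall_vertex_RAC: "e \<in> wall S E r \<Longrightarrow> v \<in> e \<Longrightarrow> v \<in> RAC S E"
proof -
  assume "e \<in> wall S E r" "v \<in> e"
  then obtain w s where "set w \<subseteq> S" "s \<in> S" "e = {cls w, cls (w @ [s])}" by (auto elim: wallE)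
  then show ?thesis using \<open>v \<in> e\<close> RACI[of w] RACI[of "w @ [s]"] by auto
qed

lemma sig_app: "sig r (cls (a @ c)) = (sig r (cls a) \<noteq> odd (cnt r (rl a c)))"
  by (simp add: sig_cls par_app)

lemma cnt_pos: "cnt r xs > 0 \<Longrightarrow> \<exists>i < length xs. xs ! i = r"
  unfolding cnt_def
  by (metis (mono_tags) filter_False in_set_conv_nth length_greater_0_conv)

lemma cnt_distinct: "distinct xs \<Longrightarrow> cnt r xs \<le> 1"
proof -
  assume d: "distinct xs"
  have "distinct (filter (\<lambda>g. g = r) xs)" using d by simp
  moreover have "set (filter (\<lambda>g. g = r) xs) \<subseteq> {r}" by auto
  ultimately show ?thesis unfolding cnt_def
    by (metis card_mono distinct_card finite.emptyI finite.insertI is_singletonI is_singleton_altdef)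
qed

lemma cnt_one: "distinct xs \<Longrightarrow> r \<in> set xs \<Longrightarrow> cnt r xs = 1"
proof -
  assume "distinct xs" "r \<in> set xs"
  moreover have "cnt r xs > 0" using \<open>r \<in> set xs\<close> unfolding cnt_def
    by (metis (mono_tags, lifting) filter_empty_conv length_greater_0_conv)
  ultimately show ?thesis using cnt_distinct[of xs r] by linarith
qed

end


context rc begin

lemma cls_nil_inv: "set L \<subseteq> S \<Longrightarrow> cls (X @ rev L @ L) = cls X"
  using cls_app2[of "rev L @ L" "[]" X] eqv_inv2[of L] cls_eq by auto

lemma geodesic:
  assumes a: "set a \<subseteq> S" and c: "set c \<subseteq> S"
    and min: "\<And>c'. set c' \<subseteq> S \<Longrightarrow> cls (a @ c') = cls (a @ c) \<Longrightarrow> length c \<le> length c'"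
  shows "distinct (rl a c)"
proof (rule ccontr)
  assume "\<not> distinct (rl a c)"
  then obtain i0 j0 where "i0 < length c" "j0 < length c" "i0 \<noteq> j0" "rl a c ! i0 = rl a c ! j0"
    by (auto simp: distinct_conv_nth)
  then obtain i j where ij: "i < j" "j < length c" "rl a c ! i = rl a c ! j"
  proof (cases "i0 < j0")
    case True then show ?thesis using that \<open>j0 < length c\<close> \<open>rl a c ! i0 = rl a c ! j0\<close> by blast
  next
    case False then have "j0 < i0" using \<open>i0 \<noteq> j0\<close> by simp
    then show ?thesis using that \<open>i0 < length c\<close> \<open>rl a c ! i0 = rl a c ! j0\<close> by metis
  qed
  define P where "P = a @ take i c"
  define x where "x = c ! i"
  define M where "M = take (j - Suc i) (drop (Suc i) c)"
  define y where "y = c ! j"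
  define Q where "Q = drop (Suc j) c"
  define L where "L = a @ take j c"
  have tj: "take j c = take i c @ [x] @ M"
  proof -
    have "take j c = take (Suc i + (j - Suc i)) c" using ij by simp
    also have "\<dots> = take (Suc i) c @ M" unfolding M_def by (rule take_add)
    finally show ?thesis using ij by (simp add: take_Suc_nth x_def)
  qed
  have LP: "L = P @ [x] @ M" by (simp add: L_def P_def tj)
  have cs: "c = take j c @ [y] @ Q"
    using id_take_nth_drop[OF ij(2)] by (simp add: y_def Q_def)
  have sL: "set L \<subseteq> S" using a c set_take_subset[of j c] by (auto simp: L_def)
  have sP: "set P \<subseteq> S" using a c set_take_subset[of i c] by (auto simp: P_def)
  have xS: "x \<in> S" using c ij by (auto simp: x_def)
  have req: "cls (P @ [x] @ rev P) = cls (L @ [y] @ rev L)"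
    using ij nth_rl[of i c a] nth_rl[of j c a]
    by (simp add: refl_of_def P_def L_def x_def y_def)
  have "cls (L @ [y]) = cls ((L @ [y]) @ rev L @ L)" by (rule sym[OF cls_nil_inv[OF sL]])
  also have "\<dots> = cls ((L @ [y] @ rev L) @ L)" by simp
  also have "\<dots> = cls ((P @ [x] @ rev P) @ L)" by (rule cls_app1) (use req in simp)
  also have "\<dots> = cls ((P @ [x]) @ rev P @ P @ ([x] @ M))" by (simp add: LP)
  also have "\<dots> = cls ((P @ [x]) @ ([x] @ M))" by (rule cls_app2) (rule cls_inv2[OF sP])
  also have "\<dots> = cls (P @ [x, x] @ M)" by simp
  also have "\<dots> = cls (P @ M)" by (rule cls_ss[OF xS])
  finally have key: "cls (L @ [y]) = cls (P @ M)" .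
  define c' where "c' = take i c @ M @ Q"
  have "a @ c = a @ (take j c @ [y] @ Q)" using cs by simp
  then have "a @ c = (L @ [y]) @ Q" by (simp add: L_def)
  moreover have "a @ c' = (P @ M) @ Q" by (simp add: c'_def P_def)
  ultimately have "cls (a @ c') = cls (a @ c)" using cls_app1[OF key, of Q] by simp
  moreover have "set c' \<subseteq> S" using c set_take_subset[of i c] set_drop_subset[of "Suc j" c]
      set_take_subset[of "j - Suc i" "drop (Suc i) c"] set_drop_subset[of "Suc i" c]
    by (auto simp: c'_def M_def Q_def)
  ultimately have "length c \<le> length c'" using min by blast
  moreover have "length c' < length c" using ij by (simp add: c'_def M_def Q_def)
  ultimately show False by simp
qed

lemma shortest:
  assumes "set a \<subseteq> S" "set b \<subseteq> S"
  obtains c where "set c \<subseteq> S" "cls (a @ c) = cls b" "distinct (rl a c)"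
proof -
  let ?P = "\<lambda>c. set c \<subseteq> S \<and> cls (a @ c) = cls b"
  have "?P (rev a @ b)" using assms cls_inv[of a b] by auto
  then obtain c where c: "?P c" and m: "\<And>y. ?P y \<Longrightarrow> length c \<le> length y"
    using ex_has_least_nat[of ?P "rev a @ b" length] by blast
  have "distinct (rl a c)"
    by (rule geodesic) (use assms c m in auto)
  then show ?thesis using c that by blast
qed

lemma SEP:
  assumes a: "set a \<subseteq> S" and b: "set b \<subseteq> S"
  shows "separates S E (wall S E r) (cls a) (cls b) \<longleftrightarrow> sig r (cls a) \<noteq> sig r (cls b)"
proof
  assume sep: "separates S E (wall S E r) (cls a) (cls b)"
  show "sig r (cls a) \<noteq> sig r (cls b)"
  proof
    assume eq: "sig r (cls a) = sig r (cls b)"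
    obtain c where c: "set c \<subseteq> S" "cls (a @ c) = cls b" "distinct (rl a c)"
      using shortest[OF a b] by blast
    have "sig r (cls b) = (sig r (cls a) \<noteq> odd (cnt r (rl a c)))" using sig_app[of r a c] c(2) by simp
    then have "\<not> odd (cnt r (rl a c))" using eq by (cases "sig r (cls b)") auto
    then have nr: "r \<notin> set (rl a c)" using cnt_one[OF c(3), of r] by auto
    have "cay_path S E (path_of a c) (cls a) (cls b)" using path_of_path[OF a c(1)] c(2) by simp
    then obtain e where "e \<in> path_edges (path_of a c)" "e \<in> wall S E r"
      using sep unfolding separates_def by blast
    then obtain i where i: "i < length c" "{cls (a @ take i c), cls (a @ take i c @ [c ! i])} \<in> wall S E r"
      unfolding path_edges_path_of by blast
    have "set (a @ take i c) \<subseteq> S" using a c(1) set_take_subset[of i c] by auto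
    moreover have "c ! i \<in> S" using c(1) i by auto
    ultimately have h: "{cls (a @ take i c), cls ((a @ take i c) @ [c ! i])} \<in> wall S E r \<longleftrightarrow> refl_of (a @ take i c) (c ! i) = r"
      by (rule wall_edge)
    have "refl_of (a @ take i c) (c ! i) = r" using h i(2) by simp
    then have "rl a c ! i = r" using nth_rl i by simp
    then show False using nth_mem[of i "rl a c"] i nr by simp
  qed
next
  assume ne: "sig r (cls a) \<noteq> sig r (cls b)"
  show "separates S E (wall S E r) (cls a) (cls b)"
    unfolding separates_def
  proof (intro allI impI)
    fix p assume "cay_path S E p (cls a) (cls b)"
    then obtain c where c: "set c \<subseteq> S" "p = path_of a c" "cls b = cls (a @ c)"
      using path_word by blast
    have "odd (cnt r (rl a c))" using ne sig_app[of r a c] c(3) by auto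
    then have "cnt r (rl a c) > 0" by (simp add: odd_pos)
    then obtain i where i: "i < length c" "rl a c ! i = r" using cnt_pos[of r "rl a c"] by auto
    have "set (a @ take i c) \<subseteq> S" using a c(1) set_take_subset[of i c] by auto
    moreover have "c ! i \<in> S" using c(1) i by auto
    moreover have "refl_of (a @ take i c) (c ! i) = r" using i nth_rl by simp
    ultimately have "{cls (a @ take i c), cls ((a @ take i c) @ [c ! i])} \<in> wall S E r"
      using wall_edge[of "a @ take i c" "c ! i" r] by blast
    then have "{cls (a @ take i c), cls (a @ take i c @ [c ! i])} \<in> wall S E r" by simp
    moreover have "{cls (a @ take i c), cls (a @ take i c @ [c ! i])} \<in> path_edges p"
      using c(2) i(1) by (auto simp: path_edges_path_of)
    ultimately show "\<exists>e\<in>path_edges p. e \<in> wall S E r" by blast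
  qed
qed

lemma separating_reflection:
  assumes a: "set a \<subseteq> S" and b: "set b \<subseteq> S" and ne: "cls a \<noteq> cls b"
  shows "\<exists>r. reflection S E r \<and> sig r (cls a) \<noteq> sig r (cls b)"
proof -
  obtain c where c: "set c \<subseteq> S" "cls (a @ c) = cls b" "distinct (rl a c)"
    using shortest[OF a b] by blast
  have "c \<noteq> []"
  proof
    assume "c = []"
    then have "cls (a @ c) = cls a" by simp
    then show False using c(2) ne by simp
  qed
  then have l: "0 < length c" by simp
  define r where "r = rl a c ! 0"
  have rr: "r = cls (a @ [c ! 0] @ rev a)" using nth_rl[OF l, of a] by (simp add: r_def refl_of_def)
  have "r \<in> set (rl a c)" using l by (simp add: r_def)
  then have "cnt r (rl a c) = 1" by (rule cnt_one[OF c(3)])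
  moreover have "sig r (cls b) = (sig r (cls a) \<noteq> odd (cnt r (rl a c)))"
    using sig_app[of r a c] c(2) by simp
  ultimately have "sig r (cls a) \<noteq> sig r (cls b)" by simp
  moreover have "c ! 0 \<in> S" using c(1) l by (meson nth_mem subsetD)
  then have "reflection S E r" unfolding reflection_def rr using a by blast
  ultimately show ?thesis by blast
qed

lemma Wsep_finite:
  assumes a: "set a \<subseteq> S" and b: "set b \<subseteq> S"
  shows "finite (Wsep S E (cls a) (cls b))"
proof -
  define c where "c = rev a @ b"
  have sc: "set c \<subseteq> S" using a b by (auto simp: c_def)
  have cb: "cls (a @ c) = cls b" using cls_inv[OF a] by (simp add: c_def)
  have pp: "cay_path S E (path_of a c) (cls a) (cls b)" using path_of_path[OF a sc] cb by simp
  have "Wsep S E (cls a) (cls b) \<subseteq> (\<lambda>i. wall S E (refl_of (a @ take i c) (c ! i))) ` {..<length c}"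
  proof
    fix W assume W: "W \<in> Wsep S E (cls a) (cls b)"
    then obtain r where Wr: "W = wall S E r" unfolding Wsep_def walls_def by blast
    from W pp obtain e where "e \<in> path_edges (path_of a c)" "e \<in> W"
      unfolding Wsep_def separates_def by blast
    then obtain i where i: "i < length c" "{cls (a @ take i c), cls (a @ take i c @ [c ! i])} \<in> wall S E r"
      by (auto simp: path_edges_path_of Wr)
    have "set (a @ take i c) \<subseteq> S" using a sc set_take_subset[of i c] by auto
    moreover have "c ! i \<in> S" using sc i by auto
    ultimately have h: "{cls (a @ take i c), cls ((a @ take i c) @ [c ! i])} \<in> wall S E r \<longleftrightarrow> refl_of (a @ take i c) (c ! i) = r"
      by (rule wall_edge)
    have "refl_of (a @ take i c) (c ! i) = r" using h i(2) by simp
    then show "W \<in> (\<lambda>i. wall S E (refl_of (a @ take i c) (c ! i))) ` {..<length c}"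
      using i Wr by blast
  qed
  then show ?thesis by (rule finite_surj[rotated]) simp
qed

end


context rc begin

lemma path_edges_iff: "e \<in> path_edges p \<longleftrightarrow> (\<exists>j < length p - 1. e = {p ! j, p ! Suc j})"
  unfolding path_edges_def by blast

lemma sep_edge:
  assumes "separates S E W x y" "cay_path S E p x y"
  obtains j where "j < length p - 1" "{p ! j, p ! Suc j} \<in> W"
proof -
  obtain e where "e \<in> path_edges p" "e \<in> W" using assms unfolding separates_def by blast
  then show ?thesis using that unfolding path_edges_iff by blast
qed

lemma path_prefix:
  assumes "cay_path S E p x y" "i < length p"
  shows "cay_path S E (take (Suc i) p) x (p ! i)"
    and "e \<in> path_edges (take (Suc i) p) \<Longrightarrow> \<exists>j < i. e = {p ! j, p ! Suc j}"
proof -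
  have ne: "p \<noteq> []" and hd: "hd p = x" and adj: "\<And>j. j < length p - 1 \<Longrightarrow> cay_adj S E (p ! j) (p ! Suc j)"
    using assms(1) unfolding cay_path_def by auto
  have lt: "length (take (Suc i) p) = Suc i" using assms(2) by simp
  show "cay_path S E (take (Suc i) p) x (p ! i)"
    unfolding cay_path_def
  proof (intro conjI allI impI)
    show "take (Suc i) p \<noteq> []" using ne by simp
    show "hd (take (Suc i) p) = x" using hd ne by (simp add: hd_conv_nth)
    have "take (Suc i) p \<noteq> []" using ne by simp
    then show "last (take (Suc i) p) = p ! i" using lt assms(2) by (simp add: last_conv_nth)
    fix j assume "j < length (take (Suc i) p) - 1"
    then have "j < i" using lt by simp
    then show "cay_adj S E (take (Suc i) p ! j) (take (Suc i) p ! Suc j)"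
      using adj[of j] assms(2) by simp
  qed
  assume "e \<in> path_edges (take (Suc i) p)"
  then obtain j where "j < i" "e = {take (Suc i) p ! j, take (Suc i) p ! Suc j}"
    unfolding path_edges_iff using lt by auto
  then show "\<exists>j < i. e = {p ! j, p ! Suc j}" by auto
qed

lemma less_sep_trans:
  assumes "wall_less S E x W1 W2" "wall_less S E x W2 W3" "e \<in> W3" "v \<in> e"
  shows "separates S E W1 x v"
  unfolding separates_def
proof (intro allI impI)
  fix p assume p: "cay_path S E p x v"
  have "separates S E W2 x v" using assms(2-4) unfolding wall_less_def by blast
  then obtain j where j: "j < length p - 1" "{p ! j, p ! Suc j} \<in> W2"
    using p by (rule sep_edge)
  have "separates S E W1 x (p ! j)" using assms(1) j(2) unfolding wall_less_def by blast
  moreover have pp: "cay_path S E (take (Suc j) p) x (p ! j)" using path_prefix(1)[OF p] j by simp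
  ultimately obtain e' where e': "e' \<in> path_edges (take (Suc j) p)" "e' \<in> W1"
    unfolding separates_def by blast
  have jl: "j < length p" using j(1) by simp
  obtain k where "k < j" "e' = {p ! k, p ! Suc k}" using path_prefix(2)[OF p jl e'(1)] by blast
  then have "e' \<in> path_edges p" unfolding path_edges_iff using j by (auto intro!: exI[of _ k])
  then show "\<exists>e\<in>path_edges p. e \<in> W1" using e' by blast
qed

lemma walls_E:
  assumes "W \<in> walls S E"
  obtains r w s where "W = wall S E r" "set w \<subseteq> S" "s \<in> S" "r = refl_of w s"
  using assms unfolding walls_def reflection_def refl_of_def by blast

lemma wall_has_edge:
  assumes "set w \<subseteq> S" "s \<in> S"
  shows "{cls w, cls (w @ [s])} \<in> wall S E (refl_of w s)"
  using wall_edge[OF assms] by simp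

lemma less_asym:
  assumes l1: "wall_less S E x W1 W2" and l2: "wall_less S E x W2 W1"
    and W1: "W1 \<in> walls S E" and x: "x \<in> RAC S E"
  shows False
proof -
  obtain r w s where r: "W1 = wall S E r" "set w \<subseteq> S" "s \<in> S" "r = refl_of w s"
    using W1 by (rule walls_E)
  obtain a where a: "set a \<subseteq> S" "x = cls a" using x by (rule RACE)
  have e1: "{cls w, cls (w @ [s])} \<in> W1" using wall_has_edge[OF r(2,3)] r(1,4) by simp
  define c where "c = rev a @ w"
  have sc: "set c \<subseteq> S" using a r by (auto simp: c_def)
  have "cls (a @ c) = cls w" using cls_inv[OF a(1)] by (simp add: c_def)
  then have p: "cay_path S E (path_of a c) x (cls w)" using path_of_path[OF a(1) sc] a by simp
  define p' where "p' = path_of a c"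
  have "separates S E W2 x (cls w)" using l2 e1 unfolding wall_less_def by blast
  then obtain j where "j < length p' - 1" "{p' ! j, p' ! Suc j} \<in> W2"
    using p unfolding p'_def by (rule sep_edge)
  then have ex: "\<exists>j. j < length p' - 1 \<and> {p' ! j, p' ! Suc j} \<in> W1 \<union> W2" by blast
  obtain i where i: "i < length p' - 1" "{p' ! i, p' ! Suc i} \<in> W1 \<union> W2"
    and mn: "\<And>k. k < i \<Longrightarrow> \<not> (k < length p' - 1 \<and> {p' ! k, p' ! Suc k} \<in> W1 \<union> W2)"
    using exists_least_iff[THEN iffD1, OF ex] by blast
  have pp: "cay_path S E (take (Suc i) p') x (p' ! i)" using path_prefix(1)[OF p[folded p'_def], of i] i by simp
  have sepA: "separates S E Wa x (p' ! i)" if "{p' ! i, p' ! Suc i} \<in> Wb" "wall_less S E x Wa Wb" for Wa Wb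
    using that unfolding wall_less_def by blast
  have "separates S E W1 x (p' ! i) \<or> separates S E W2 x (p' ! i)"
    using i(2) sepA[OF _ l1] sepA[OF _ l2] by blast
  then obtain e where e: "e \<in> path_edges (take (Suc i) p')" "e \<in> W1 \<union> W2"
    using pp unfolding separates_def by blast
  have il: "i < length p'" using i(1) by simp
  obtain k where "k < i" "e = {p' ! k, p' ! Suc k}"
    using path_prefix(2)[OF p[folded p'_def] il e(1)] by blast
  then show False using mn[of k] i e by auto
qed

lemma less_trans:
  assumes "wall_less S E x W1 W2" "wall_less S E x W2 W3" "W1 \<in> walls S E" "x \<in> RAC S E"
  shows "wall_less S E x W1 W3"
proof -
  have "W1 \<noteq> W3"
  proof
    assume "W1 = W3"
    then show False using less_asym[OF assms(1) _ assms(3,4)] assms(2) by simp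
  qed
  then show ?thesis unfolding wall_less_def using less_sep_trans[OF assms(1,2)] by blast
qed

lemma SEP':
  assumes "g \<in> RAC S E" "h \<in> RAC S E"
  shows "separates S E (wall S E r) g h \<longleftrightarrow> sig r g \<noteq> sig r h"
proof -
  obtain a b where "set a \<subseteq> S" "g = cls a" "set b \<subseteq> S" "h = cls b"
    using assms by (meson RACE)
  then show ?thesis using SEP by simp
qed

lemma path_vertices_RAC:
  assumes "cay_path S E p (cls a) y" "i < length p" and that: "set a \<subseteq> S"
  shows "p ! i \<in> RAC S E"
proof -
  obtain c where c: "set c \<subseteq> S" "p = path_of a c" using path_word[OF assms(1)] by blast
  have "i \<le> length c" using assms(2) c by simp
  then have "p ! i = cls (a @ take i c)" using c by (simp add: nth_path_of)
  moreover have "set (a @ take i c) \<subseteq> S" using that c(1) set_take_subset[of i c] by auto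
  ultimately show ?thesis using RACI by simp
qed

lemma cross_not_less:
  assumes cr: "walls_cross S E (wall S E r) (wall S E r')" and x: "x \<in> RAC S E"
  shows "\<not> wall_less S E x (wall S E r) (wall S E r')"
proof
  assume less: "wall_less S E x (wall S E r) (wall S E r')"
  obtain x00 x01 x10 x11 where R: "x00 \<in> RAC S E" "x01 \<in> RAC S E" "x10 \<in> RAC S E" "x11 \<in> RAC S E"
    and c1: "\<not> separates S E (wall S E r) x00 x01" "\<not> separates S E (wall S E r) x10 x11"
    and c2: "separates S E (wall S E r) x00 x10"
    and c3: "separates S E (wall S E r') x00 x01" "separates S E (wall S E r') x10 x11"
    using cr unfolding walls_cross_def by blast
  have "sig r x00 \<noteq> sig r x10" using c2 SEP' R by blast
  then obtain y0 y1 where y: "y0 \<in> RAC S E" "y1 \<in> RAC S E" "sig r y0 = sig r x"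
    "\<not> separates S E (wall S E r) y0 y1" "separates S E (wall S E r') y0 y1"
    using R c1 c3 by (cases "sig r x00 = sig r x") auto
  obtain p where p: "cay_path S E p y0 y1" "\<not> (\<exists>e\<in>path_edges p. e \<in> wall S E r)"
    using y(4) unfolding separates_def by blast
  obtain j where j: "j < length p - 1" "{p ! j, p ! Suc j} \<in> wall S E r'"
    using y(5) p(1) by (rule sep_edge)
  obtain a0 where a0: "set a0 \<subseteq> S" "y0 = cls a0" using y(1) by (rule RACE)
  have vR: "p ! j \<in> RAC S E" using path_vertices_RAC[of p a0 y1 j] p(1) a0 j by simp
  have "separates S E (wall S E r) x (p ! j)" using less j(2) unfolding wall_less_def by blast
  then have s1: "sig r x \<noteq> sig r (p ! j)" using SEP'[OF x vR] by blast
  have pp: "cay_path S E (take (Suc j) p) y0 (p ! j)" using path_prefix(1)[OF p(1), of j] j by simp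
  have "\<not> separates S E (wall S E r) y0 (p ! j)"
  proof
    assume "separates S E (wall S E r) y0 (p ! j)"
    then obtain e where e: "e \<in> path_edges (take (Suc j) p)" "e \<in> wall S E r"
      using pp unfolding separates_def by blast
    have jl: "j < length p" using j(1) by simp
    obtain k where "k < j" "e = {p ! k, p ! Suc k}" using path_prefix(2)[OF p(1) jl e(1)] by blast
    then have "e \<in> path_edges p" unfolding path_edges_iff using j by (auto intro!: exI[of _ k])
    then show False using p(2) e by blast
  qed
  then have "sig r y0 = sig r (p ! j)" using SEP'[OF y(1) vR] by blast
  then show False using s1 y(3) by simp
qed

lemma cross_sym: "walls_cross S E W W' \<Longrightarrow> walls_cross S E W' W"
  unfolding walls_cross_def by blast

end


context rc begin

definition tr :: "'a list \<Rightarrow> 'a list set \<Rightarrow> 'a list set" where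
  "tr t g = cls (t @ (SOME w. w \<in> g))"

definition trW :: "'a list \<Rightarrow> 'a list set set set \<Rightarrow> 'a list set set set" where
  "trW t W = (\<lambda>e. tr t ` e) ` W"

lemma tr_cls: "tr t (cls w) = cls (t @ w)"
proof -
  have "w \<in> cls w" by (simp add: elt_def)
  then have "(SOME w'. w' \<in> cls w) \<in> cls w" by (rule someI)
  then have "w \<sim> (SOME w'. w' \<in> cls w)" by (simp add: elt_def)
  then have "cls (SOME w'. w' \<in> cls w) = cls w" using cls_eq by (metis eqv_sym)
  then show ?thesis unfolding tr_def by (rule cls_app2)
qed

lemma tr_RAC: "set t \<subseteq> S \<Longrightarrow> g \<in> RAC S E \<Longrightarrow> tr t g \<in> RAC S E"
  by (metis RACE RACI tr_cls le_sup_iff set_append)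

lemma tr_inv: "set t \<subseteq> S \<Longrightarrow> g \<in> RAC S E \<Longrightarrow> tr (rev t) (tr t g) = g"
  by (metis RACE tr_cls cls_inv2 append_assoc)

lemma tr_inv': "set t \<subseteq> S \<Longrightarrow> g \<in> RAC S E \<Longrightarrow> tr t (tr (rev t) g) = g"
  using tr_inv[of "rev t" g] by simp

lemma tr_inj: "set t \<subseteq> S \<Longrightarrow> inj_on (tr t) (RAC S E)"
  by (metis inj_onI tr_inv)

lemma adj_RAC: "cay_adj S E g h \<Longrightarrow> g \<in> RAC S E \<and> h \<in> RAC S E"
  unfolding cay_adj_def by (auto intro!: RACI)

lemma adj_tr: "set t \<subseteq> S \<Longrightarrow> cay_adj S E g h \<Longrightarrow> cay_adj S E (tr t g) (tr t h)"
  unfolding cay_adj_def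
proof (elim exE conjE)
  fix w s assume "set t \<subseteq> S" "set w \<subseteq> S" "s \<in> S" "g = cls w" "h = cls (w @ [s])"
  then show "\<exists>w s. set w \<subseteq> S \<and> s \<in> S \<and> tr t g = cls w \<and> tr t h = cls (w @ [s])"
    by (intro exI[of _ "t @ w"] exI[of _ s]) (simp add: tr_cls)
qed

lemma path_tr:
  assumes "set t \<subseteq> S" "cay_path S E p x y"
  shows "cay_path S E (map (tr t) p) (tr t x) (tr t y)"
  using assms adj_tr unfolding cay_path_def by (auto simp: hd_map last_map)

lemma path_edges_map: "path_edges (map f p) = (\<lambda>e. f ` e) ` path_edges p"
proof (intro set_eqI iffI)
  fix e assume "e \<in> path_edges (map f p)"
  then obtain i where i: "i < length p - 1" "e = {map f p ! i, map f p ! Suc i}"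
    unfolding path_edges_def by auto
  then have "e = f ` {p ! i, p ! Suc i}" by simp
  moreover have "{p ! i, p ! Suc i} \<in> path_edges p" using i unfolding path_edges_def by blast
  ultimately show "e \<in> (\<lambda>e. f ` e) ` path_edges p" by blast
next
  fix e assume "e \<in> (\<lambda>e. f ` e) ` path_edges p"
  then obtain i where i: "i < length p - 1" "e = f ` {p ! i, p ! Suc i}"
    unfolding path_edges_def by blast
  then show "e \<in> path_edges (map f p)" unfolding path_edges_def
    by (auto intro!: exI[of _ i])
qed

lemma sep_tr_back:
  assumes t: "set t \<subseteq> S" and WR: "\<And>e. e \<in> W \<Longrightarrow> e \<subseteq> RAC S E"
    and sep: "separates S E (trW t W) (tr t x) (tr t y)"
  shows "separates S E W x y"
  unfolding separates_def
proof (intro allI impI)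
  fix p assume p: "cay_path S E p x y"
  have "cay_path S E (map (tr t) p) (tr t x) (tr t y)" by (rule path_tr[OF t p])
  then obtain j where j: "j < length p - 1" "{map (tr t) p ! j, map (tr t) p ! Suc j} \<in> trW t W"
    using sep sep_edge by (metis length_map)
  then obtain e where e: "e \<in> W" "tr t ` e = {tr t (p ! j), tr t (p ! Suc j)}"
    unfolding trW_def by auto
  have "cay_adj S E (p ! j) (p ! Suc j)" using p j unfolding cay_path_def by auto
  then have sub: "{p ! j, p ! Suc j} \<subseteq> RAC S E" using adj_RAC by auto
  have "tr t ` e = tr t ` {p ! j, p ! Suc j}" using e(2) by simp
  then have ee: "e = {p ! j, p ! Suc j}"
    using inj_on_image_eq_iff[OF tr_inj[OF t] WR[OF e(1)] sub] by blast
  have "{p ! j, p ! Suc j} \<in> path_edges p" unfolding path_edges_iff using j(1) by blast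
  then show "\<exists>e\<in>path_edges p. e \<in> W" using e(1) ee by blast
qed

lemma trW_inv:
  assumes t: "set t \<subseteq> S" and WR: "\<And>e. e \<in> W \<Longrightarrow> e \<subseteq> RAC S E"
  shows "trW (rev t) (trW t W) = W"
proof -
  have "tr (rev t) ` tr t ` e = e" if "e \<in> W" for e
  proof -
    have "tr (rev t) ` tr t ` e = (\<lambda>g. tr (rev t) (tr t g)) ` e" by (simp add: image_image)
    also have "\<dots> = e" using tr_inv[OF t] WR[OF that] by (auto simp: image_iff)
    finally show ?thesis .
  qed
  then show ?thesis unfolding trW_def by (auto simp: image_image)
qed

lemma trW_RAC:
  assumes t: "set t \<subseteq> S" and WR: "\<And>e. e \<in> W \<Longrightarrow> e \<subseteq> RAC S E"
  shows "e \<in> trW t W \<Longrightarrow> e \<subseteq> RAC S E"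
  using tr_RAC[OF t] WR unfolding trW_def by blast

lemma wall_RAC: "e \<in> wall S E r \<Longrightarrow> e \<subseteq> RAC S E"
  using wall_vertex_RAC by blast

lemma walls_RAC: "W \<in> walls S E \<Longrightarrow> e \<in> W \<Longrightarrow> e \<subseteq> RAC S E"
  unfolding walls_def using wall_RAC by blast

lemma sep_tr:
  assumes t: "set t \<subseteq> S" and WR: "\<And>e. e \<in> W \<Longrightarrow> e \<subseteq> RAC S E"
    and x: "x \<in> RAC S E" and y: "y \<in> RAC S E" and sep: "separates S E W x y"
  shows "separates S E (trW t W) (tr t x) (tr t y)"
proof (rule sep_tr_back[of "rev t"])
  show "set (rev t) \<subseteq> S" using t by simp
  show "\<And>e. e \<in> trW t W \<Longrightarrow> e \<subseteq> RAC S E" using trW_RAC[OF t WR] by blast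
  show "separates S E (trW (rev t) (trW t W)) (tr (rev t) (tr t x)) (tr (rev t) (tr t y))"
    using sep trW_inv[OF t WR] tr_inv[OF t x] tr_inv[OF t y] by simp
qed

lemma trW_wall:
  assumes t: "set t \<subseteq> S" and w0: "set w0 \<subseteq> S" and s0: "s0 \<in> S"
  shows "trW t (wall S E (refl_of w0 s0)) = wall S E (refl_of (t @ w0) s0)"
proof
  show "trW t (wall S E (refl_of w0 s0)) \<subseteq> wall S E (refl_of (t @ w0) s0)"
  proof
    fix e' assume "e' \<in> trW t (wall S E (refl_of w0 s0))"
    then obtain e where e: "e \<in> wall S E (refl_of w0 s0)" "e' = tr t ` e" unfolding trW_def by blast
    obtain w s where ws: "set w \<subseteq> S" "s \<in> S" "e = {cls w, cls (w @ [s])}" "refl_of w s = refl_of w0 s0"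
      using e(1) by (rule wallE)
    have e'': "e' = {cls (t @ w), cls ((t @ w) @ [s])}" using e ws by (simp add: tr_cls)
    have "refl_of (t @ w) s = cls (t @ (w @ [s] @ rev w) @ rev t)" by (simp add: refl_of_def)
    also have "\<dots> = cls (t @ (w0 @ [s0] @ rev w0) @ rev t)"
      using ws(4) unfolding refl_of_def by (intro cls_app2 cls_app1) simp
    also have "\<dots> = refl_of (t @ w0) s0" by (simp add: refl_of_def)
    finally have "refl_of (t @ w) s = refl_of (t @ w0) s0" .
    then show "e' \<in> wall S E (refl_of (t @ w0) s0)"
      using wall_edge[of "t @ w" s] ws t e'' by simp
  qed
next
  show "wall S E (refl_of (t @ w0) s0) \<subseteq> trW t (wall S E (refl_of w0 s0))"
  proof
    fix e assume "e \<in> wall S E (refl_of (t @ w0) s0)"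
    then obtain w s where ws: "set w \<subseteq> S" "s \<in> S" "e = {cls w, cls (w @ [s])}" "refl_of w s = refl_of (t @ w0) s0"
      by (rule wallE)
    define w' where "w' = rev t @ w"
    have sw': "set w' \<subseteq> S" using t ws by (auto simp: w'_def)
    have "refl_of w' s = cls (rev t @ (w @ [s] @ rev w) @ t)" by (simp add: refl_of_def w'_def)
    also have "\<dots> = cls (rev t @ (t @ (w0 @ [s0] @ rev w0) @ rev t) @ t)"
      using ws(4) unfolding refl_of_def by (intro cls_app2 cls_app1) simp
    also have "\<dots> = cls (rev t @ t @ ((w0 @ [s0] @ rev w0) @ rev t @ t))" by simp
    also have "\<dots> = cls ((w0 @ [s0] @ rev w0) @ rev t @ t)" by (rule cls_inv2[OF t])
    also have "\<dots> = cls (w0 @ [s0] @ rev w0)" by (rule cls_nil_inv[OF t])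
    finally have "refl_of w' s = refl_of w0 s0" by (simp add: refl_of_def)
    then have "{cls w', cls (w' @ [s])} \<in> wall S E (refl_of w0 s0)" using wall_edge[OF sw' ws(2)] by simp
    moreover have "tr t ` {cls w', cls (w' @ [s])} = e"
      using ws(3) cls_inv[OF t, of w] cls_inv[OF t, of "w @ [s]"] by (simp add: tr_cls w'_def)
    ultimately show "e \<in> trW t (wall S E (refl_of w0 s0))" unfolding trW_def by blast
  qed
qed

lemma trW_walls:
  assumes t: "set t \<subseteq> S" and W: "W \<in> walls S E"
  shows "trW t W \<in> walls S E"
proof -
  obtain r w s where "W = wall S E r" "set w \<subseteq> S" "s \<in> S" "r = refl_of w s"
    using W by (rule walls_E)
  then have "trW t W = wall S E (refl_of (t @ w) s)" using trW_wall[OF t] by simp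
  moreover have "reflection S E (refl_of (t @ w) s)"
    unfolding reflection_def refl_of_def using t \<open>set w \<subseteq> S\<close> \<open>s \<in> S\<close>
    by (intro exI[of _ "t @ w"] exI[of _ s]) simp
  ultimately show ?thesis unfolding walls_def by blast
qed

end


lemma comb:
  fixes T :: "'w set" and less :: "'w \<Rightarrow> 'w \<Rightarrow> bool" and cross :: "'w \<Rightarrow> 'w \<Rightarrow> bool" and d :: nat
  assumes fin: "finite T" and ne: "T \<noteq> {}"
    and irr: "\<And>x. x \<in> T \<Longrightarrow> \<not> less x x"
    and trans: "\<And>x y z. x \<in> T \<Longrightarrow> y \<in> T \<Longrightarrow> z \<in> T \<Longrightarrow> less x y \<Longrightarrow> less y z \<Longrightarrow> less x z"
    and ci: "\<And>x y. x \<in> T \<Longrightarrow> y \<in> T \<Longrightarrow> x \<noteq> y \<Longrightarrow> cross x y \<Longrightarrow> \<not> less x y"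
    and hyp: "\<And>A B. A \<subseteq> T \<Longrightarrow> B \<subseteq> T \<Longrightarrow> A \<inter> B = {} \<Longrightarrow>
               (\<forall>a\<in>A. \<forall>b\<in>B. \<not> less a b \<and> \<not> less b a) \<Longrightarrow> min (card A) (card B) \<le> d"
  shows "\<exists>m\<in>T. (\<forall>y\<in>T. \<not> less y m) \<and> card {y\<in>T. m = y \<or> cross m y} \<le> (2*d+1)*4^d"
proof -
  define M where "M = {m\<in>T. \<forall>y\<in>T. \<not> less y m}"
  have MT: "M \<subseteq> T" by (auto simp: M_def)
  have finM: "finite M" using fin MT finite_subset by blast
  have below: "\<forall>x\<in>T. card {y\<in>T. less y x} = n \<longrightarrow> (\<exists>m\<in>M. m = x \<or> less m x)" for n
  proof (induction n rule: less_induct)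
    case (less n)
    show ?case
    proof (intro ballI impI)
      fix x assume x: "x \<in> T" and cn: "card {y\<in>T. less y x} = n"
      show "\<exists>m\<in>M. m = x \<or> less m x"
      proof (cases "x \<in> M")
        case True then show ?thesis by blast
      next
        case False
        then obtain y where y: "y \<in> T" "less y x" using x by (auto simp: M_def)
        have "{z\<in>T. less z y} \<subset> {z\<in>T. less z x}"
          using y trans x irr by blast
        then have "card {z\<in>T. less z y} < n"
          using cn fin by (metis (no_types, lifting) psubset_card_mono finite_subset mem_Collect_eq subsetI)
        then obtain m where "m \<in> M" "m = y \<or> less m y" using less.IH y(1) by blast
        then show ?thesis using trans y x MT by blast
      qed
    qed
  qed
  define L where "L x = {m\<in>M. m = x \<or> less m x}" for x
  have L_ne: "L x \<noteq> {}" if "x \<in> T" for x using below that unfolding L_def by blast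
  have L_sub: "L x \<subseteq> M" for x by (auto simp: L_def)
  have L_mono: "L x \<subseteq> L y" if "x \<in> T" "y \<in> T" "less x y" for x y
    using that trans MT unfolding L_def by blast
  define C where "C K = {x\<in>T. L x = K}" for K
  have C_sub: "C K \<subseteq> T" for K by (auto simp: C_def)
  have cardM: "card M \<le> 2*d+1"
  proof -
    obtain A where A: "A \<subseteq> M" "card A = card M div 2" "finite A"
      using obtain_subset_with_card_n[of "card M div 2" M] by auto
    define B where "B = M - A"
    have cB: "card B = card M - card M div 2" using A finM by (simp add: B_def card_Diff_subset)
    have "min (card A) (card B) \<le> d"
      by (rule hyp) (use A MT in \<open>auto simp: B_def M_def\<close>)
    then have "card M div 2 \<le> d" using A cB by simp
    then show ?thesis by linarith
  qed
  have chain: "L x \<subseteq> L y \<or> L y \<subseteq> L x"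
    if "x \<in> T" "y \<in> T" "card (C (L x)) > d" "card (C (L y)) > d" for x y
  proof (rule ccontr)
    assume nc: "\<not> (L x \<subseteq> L y \<or> L y \<subseteq> L x)"
    have "min (card (C (L x))) (card (C (L y))) \<le> d"
    proof (rule hyp)
      show "C (L x) \<subseteq> T" "C (L y) \<subseteq> T" by (rule C_sub)+
      show "C (L x) \<inter> C (L y) = {}" using nc by (auto simp: C_def)
      show "\<forall>a\<in>C (L x). \<forall>b\<in>C (L y). \<not> less a b \<and> \<not> less b a"
        using nc L_mono unfolding C_def by blast
    qed
    then show False using that by simp
  qed
  obtain m where mM: "m \<in> M" and mbig: "\<And>x. x \<in> T \<Longrightarrow> card (C (L x)) > d \<Longrightarrow> m \<in> L x"
  proof (cases "\<exists>x\<in>T. card (C (L x)) > d")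
    case True
    let ?P = "\<lambda>x. x \<in> T \<and> card (C (L x)) > d"
    obtain x1 where "?P x1" using True by blast
    then obtain x0 where x0: "?P x0" and x0m: "\<And>y. ?P y \<Longrightarrow> card (L x0) \<le> card (L y)"
      using ex_has_least_nat[of ?P x1 "\<lambda>x. card (L x)"] by blast
    have sub: "L x0 \<subseteq> L x" if "x \<in> T" "card (C (L x)) > d" for x
    proof (rule ccontr)
      assume "\<not> L x0 \<subseteq> L x"
      then have "L x \<subset> L x0" using chain[of x0 x] x0 that by blast
      then have "card (L x) < card (L x0)" using finM L_sub by (meson psubset_card_mono finite_subset)
      then show False using x0m[of x] that by simp
    qed
    obtain m where "m \<in> L x0" using L_ne x0 by blast
    then show ?thesis using that sub L_sub by blast
  next
    case False
    obtain x where "x \<in> T" using ne by blast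
    then obtain m where "m \<in> L x" using L_ne by blast
    then show ?thesis using that False L_sub by blast
  qed
  have mT: "m \<in> T" using mM MT by blast
  have minm: "\<forall>y\<in>T. \<not> less y m" using mM by (simp add: M_def)
  define Dm where "Dm K = {y\<in>T. L y = K}" for K
  have sub1: "{y\<in>T. m = y \<or> cross m y} \<subseteq> insert m (\<Union>K\<in>Pow (M - {m}). Dm K)"
  proof
    fix y assume y: "y \<in> {y\<in>T. m = y \<or> cross m y}"
    show "y \<in> insert m (\<Union>K\<in>Pow (M - {m}). Dm K)"
    proof (cases "y = m")
      case False
      then have "\<not> less m y" using ci[of m y] y mT by auto
      then have "m \<notin> L y" using False by (auto simp: L_def)
      then have "L y \<in> Pow (M - {m})" using L_sub by blast
      then show ?thesis using y by (auto simp: Dm_def)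
    qed simp
  qed
  have cardD: "card (Dm K) \<le> d" if "K \<in> Pow (M - {m})" for K
  proof (cases "Dm K = {}")
    case False
    then obtain y where y: "y \<in> T" "L y = K" by (auto simp: Dm_def)
    have "m \<notin> L y" using y that by auto
    then have "\<not> card (C (L y)) > d" using mbig y by blast
    moreover have "Dm K = C (L y)" using y by (simp add: Dm_def C_def)
    ultimately show ?thesis by simp
  qed simp
  have finU: "finite (\<Union>K\<in>Pow (M - {m}). Dm K)"
    using fin by (rule finite_subset[rotated]) (auto simp: Dm_def)
  have "card {y\<in>T. m = y \<or> cross m y} \<le> card (insert m (\<Union>K\<in>Pow (M - {m}). Dm K))"
    using sub1 finU by (intro card_mono) auto
  also have "\<dots> \<le> Suc (card (\<Union>K\<in>Pow (M - {m}). Dm K))" using finU by (simp add: card_insert_if)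
  also have "card (\<Union>K\<in>Pow (M - {m}). Dm K) \<le> (\<Sum>K\<in>Pow (M - {m}). card (Dm K))"
    using finM by (intro card_UN_le) simp
  also have "\<dots> \<le> card (Pow (M - {m})) * d"
    using sum_bounded_above[of "Pow (M - {m})" "\<lambda>K. card (Dm K)" d] cardD by simp
  also have "card (Pow (M - {m})) = 2 ^ (card M - 1)"
    using finM mM by (simp add: card_Pow card_Diff_singleton)
  also have "(2::nat) ^ (card M - 1) \<le> 2 ^ (2 * d)"
    using cardM by (intro power_increasing) auto
  also have "(2::nat) ^ (2 * d) = 4 ^ d" by (simp add: power_mult)
  finally have "card {y\<in>T. m = y \<or> cross m y} \<le> Suc (4 ^ d * d)" by simp
  also have "\<dots> \<le> (2*d+1) * 4^d"
  proof -
    have h1: "(4::nat) ^ d * d \<le> 2 * d * 4 ^ d" by simp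
    have h2: "(1::nat) \<le> 4 ^ d" by simp
    have h3: "(2 * d + 1) * 4 ^ d = 2 * d * 4 ^ d + (4::nat) ^ d" by (simp add: algebra_simps)
    show ?thesis unfolding h3 using h1 h2 by linarith
  qed
  finally show ?thesis using mT minm by blast
qed



context rc begin

lemma less_back:
  assumes a: "set a \<subseteq> S" and W: "W \<in> walls S E" and W': "W' \<in> walls S E"
    and l: "wall_less S E (cls []) (trW (rev a) W) (trW (rev a) W')"
  shows "wall_less S E (cls a) W W'"
  unfolding wall_less_def
proof (intro conjI ballI)
  show "W \<noteq> W'" using l unfolding wall_less_def by blast
  fix e v assume e: "e \<in> W'" and v: "v \<in> e"
  have "tr (rev a) ` e \<in> trW (rev a) W'" using e unfolding trW_def by blast
  moreover have "tr (rev a) v \<in> tr (rev a) ` e" using v by blast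
  ultimately have "separates S E (trW (rev a) W) (cls []) (tr (rev a) v)"
    using l unfolding wall_less_def by blast
  moreover have "tr (rev a) (cls a) = cls []" using cls_inv2[OF a, of "[]"] by (simp add: tr_cls)
  ultimately have "separates S E (trW (rev a) W) (tr (rev a) (cls a)) (tr (rev a) v)" by simp
  then show "separates S E W (cls a) v"
    using sep_tr_back[of "rev a" W] a walls_RAC[OF W] by simp
qed

end

theorem lemma3p6:
  fixes S :: "'a set" and E :: "'a \<Rightarrow> 'a \<Rightarrow> bool" and D :: real and a b :: "'a list"
  assumes "right_angled_coxeter S E"
    and "D > 0"
    and "set a \<subseteq> S" and "set b \<subseteq> S"
    and "elt S E (rev a @ b) \<noteq> elt S E []"
    and "bounded_product_projections S E D (elt S E (rev a @ b))"
  shows "\<exists>W \<in> Wsep S E (elt S E a) (elt S E b).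
           (\<not> (\<exists>W' \<in> Wsep S E (elt S E a) (elt S E b). wall_less S E (elt S E a) W' W)) \<and>
           finite {W' \<in> Wsep S E (elt S E a) (elt S E b). walls_intersect S E W W'} \<and>
           real (card {W' \<in> Wsep S E (elt S E a) (elt S E b). walls_intersect S E W W'})
             \<le> (2 * D + 1) * 4 powr D"
proof -
  interpret rc S E .
  note a = assms(3) and b = assms(4) and D0 = assms(2)
  define T where "T = Wsep S E (cls a) (cls b)"
  define d where "d = nat \<lfloor>D\<rfloor>"
  have TW: "T \<subseteq> walls S E" by (auto simp: T_def Wsep_def)
  have aR: "cls a \<in> RAC S E" using a by (rule RACI)
  have finT: "finite T" unfolding T_def by (rule Wsep_finite[OF a b])
  have ab: "cls a \<noteq> cls b"
  proof
    assume h: "cls a = cls b"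
    have "cls (rev a @ b) = cls (rev a @ a)" using cls_app2[OF h[symmetric]] .
    also have "\<dots> = cls []" using cls_inv2[OF a, of "[]"] by simp
    finally show False using assms(5) by simp
  qed
  obtain r where r: "reflection S E r" "sig r (cls a) \<noteq> sig r (cls b)"
    using separating_reflection[OF a b ab] by blast
  have "wall S E r \<in> T"
    unfolding T_def Wsep_def walls_def using r SEP[OF a b, of r] by blast
  then have neT: "T \<noteq> {}" by blast
  have hyp0: "\<And>A B. A \<subseteq> Wsep S E (cls []) (cls (rev a @ b)) \<Longrightarrow> B \<subseteq> Wsep S E (cls []) (cls (rev a @ b)) \<Longrightarrow>
      A \<inter> B = {} \<Longrightarrow> (\<forall>x\<in>A. \<forall>y\<in>B. incomparable S E (cls []) x y) \<Longrightarrow> real (min (card A) (card B)) \<le> D"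
    using assms(6) unfolding bounded_product_projections_def by blast
  define \<psi> where "\<psi> = trW (rev a)"
  have sra: "set (rev a) \<subseteq> S" using a by simp
  have psi_inv: "trW a (\<psi> W) = W" if "W \<in> walls S E" for W
    using trW_inv[OF sra, of W] walls_RAC[OF that] by (simp add: \<psi>_def)
  have inj: "inj_on \<psi> T"
    by (rule inj_on_inverseI[of _ "trW a"]) (use psi_inv TW in blast)
  have tra: "tr (rev a) (cls a) = cls []" using cls_inv2[OF a, of "[]"] by (simp add: tr_cls)
  have trb: "tr (rev a) (cls b) = cls (rev a @ b)" by (simp add: tr_cls)
  have psiT: "\<psi> W \<in> Wsep S E (cls []) (cls (rev a @ b))" if "W \<in> T" for W
  proof -
    have W: "W \<in> walls S E" using that TW by blast
    have "separates S E W (cls a) (cls b)" using that by (simp add: T_def Wsep_def)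
    then have "separates S E (\<psi> W) (tr (rev a) (cls a)) (tr (rev a) (cls b))"
      unfolding \<psi>_def using sep_tr[OF sra _ aR RACI[OF b]] walls_RAC[OF W] by blast
    moreover have "\<psi> W \<in> walls S E" unfolding \<psi>_def by (rule trW_walls[OF sra W])
    ultimately show ?thesis using tra trb by (simp add: Wsep_def)
  qed
  have hyp: "min (card A) (card B) \<le> d"
    if AB: "A \<subseteq> T" "B \<subseteq> T" "A \<inter> B = {}"
      and inc: "\<forall>x\<in>A. \<forall>y\<in>B. \<not> wall_less S E (cls a) x y \<and> \<not> wall_less S E (cls a) y x" for A B
  proof -
    have "real (min (card (\<psi> ` A)) (card (\<psi> ` B))) \<le> D"
    proof (rule hyp0)
      show "\<psi> ` A \<subseteq> Wsep S E (cls []) (cls (rev a @ b))" using psiT AB by blast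
      show "\<psi> ` B \<subseteq> Wsep S E (cls []) (cls (rev a @ b))" using psiT AB by blast
      show "\<psi> ` A \<inter> \<psi> ` B = {}"
        using AB inj by (metis image_Int image_empty inj_on_Un le_sup_iff sup.absorb_iff1 inj_on_image_Int)
      show "\<forall>x\<in>\<psi> ` A. \<forall>y\<in>\<psi> ` B. incomparable S E (cls []) x y"
      proof (intro ballI)
        fix x y assume "x \<in> \<psi> ` A" "y \<in> \<psi> ` B"
        then obtain u v where uv: "u \<in> A" "v \<in> B" "x = \<psi> u" "y = \<psi> v" by blast
        have uW: "u \<in> walls S E" "v \<in> walls S E" using uv AB TW by blast+
        show "incomparable S E (cls []) x y"
          unfolding incomparable_def uv \<psi>_def
          using less_back[OF a uW(1) uW(2)] less_back[OF a uW(2) uW(1)] inc uv by blast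
      qed
    qed
    moreover have "card (\<psi> ` A) = card A" "card (\<psi> ` B) = card B"
      using inj AB by (meson card_image inj_on_subset)+
    ultimately have "real (min (card A) (card B)) \<le> D" by simp
    then have "int (min (card A) (card B)) \<le> \<lfloor>D\<rfloor>" by (simp add: le_floor_iff)
    then show ?thesis unfolding d_def by linarith
  qed
  have "\<exists>m\<in>T. (\<forall>y\<in>T. \<not> wall_less S E (cls a) y m) \<and>
      card {y\<in>T. m = y \<or> walls_cross S E m y} \<le> (2*d+1)*4^d"
  proof (rule comb[OF finT neT])
    show "\<And>x. x \<in> T \<Longrightarrow> \<not> wall_less S E (cls a) x x" by (simp add: wall_less_def)
    show "\<And>x y z. x \<in> T \<Longrightarrow> y \<in> T \<Longrightarrow> z \<in> T \<Longrightarrow> wall_less S E (cls a) x y \<Longrightarrow>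
        wall_less S E (cls a) y z \<Longrightarrow> wall_less S E (cls a) x z"
      using less_trans aR TW by blast
    show "\<And>x y. x \<in> T \<Longrightarrow> y \<in> T \<Longrightarrow> x \<noteq> y \<Longrightarrow> walls_cross S E x y \<Longrightarrow> \<not> wall_less S E (cls a) x y"
    proof -
      fix x y assume "x \<in> T" "y \<in> T" "walls_cross S E x y"
      then obtain r r' where "x = wall S E r" "y = wall S E r'" using TW unfolding walls_def by blast
      then show "\<not> wall_less S E (cls a) x y" using cross_not_less[OF _ aR] \<open>walls_cross S E x y\<close> by simp
    qed
    show "\<And>A B. A \<subseteq> T \<Longrightarrow> B \<subseteq> T \<Longrightarrow> A \<inter> B = {} \<Longrightarrow>
        \<forall>x\<in>A. \<forall>y\<in>B. \<not> wall_less S E (cls a) x y \<and> \<not> wall_less S E (cls a) y x \<Longrightarrow>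
        min (card A) (card B) \<le> d" using hyp by blast
  qed
  then obtain m where m: "m \<in> T" "\<forall>y\<in>T. \<not> wall_less S E (cls a) y m"
    and cm: "card {y\<in>T. m = y \<or> walls_cross S E m y} \<le> (2*d+1)*4^d" by blast
  have setEq: "{W' \<in> T. walls_intersect S E m W'} = {y\<in>T. m = y \<or> walls_cross S E m y}"
    by (simp add: walls_intersect_def)
  have dD: "real d \<le> D" using D0 unfolding d_def by linarith
  have "real (card {W' \<in> T. walls_intersect S E m W'}) \<le> real ((2*d+1)*4^d)"
    unfolding setEq of_nat_le_iff by (rule cm)
  also have "\<dots> = (2 * real d + 1) * 4 powr (real d)"
    by (simp add: powr_realpow algebra_simps)
  also have "\<dots> \<le> (2 * D + 1) * 4 powr D"
    by (intro mult_mono powr_mono) (use dD D0 in auto)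
  finally have fin_bound: "real (card {W' \<in> T. walls_intersect S E m W'}) \<le> (2 * D + 1) * 4 powr D" .
  have "finite {W' \<in> T. walls_intersect S E m W'}" using finT by simp
  then show ?thesis using m fin_bound unfolding T_def by blast
qed

end
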